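(* Let $K\subseteq H$ be compact and $\rho>0$. Then there exists $\rho'>0$ such that $\|\Psi_\hbar(a)\|_{D_n,\rho}\le\|a\|_{\mathbb{C}^{1+n},\rho'}$ for all $\hbar\in K$ and all $a\in\mathcal{P}(\mathbb{C}^{1+n})^{U(1)}$. Conversely, there exists $\rho''>0$ such that $\|\Phi_\hbar(b)\|_{\mathbb{C}^{1+n},\rho}\le\|b\|_{D_n,\rho''}$ for all $\hbar\in K$ and all $b\in\mathcal{P}(D_n)$.
   Context: Fix $n\ge1$; $|P|=\sum P_i$; for $P\in\mathbb{N}_0^{1+n}$, $P'=(P_1,\dots,P_n)$. $\mathcal{P}(\mathbb{C}^{1+n})$ is the space of polynomials in $z^\mu,\bar z^\mu$ ($\mu=0,\dots,n$) with basis $d_{P,Q}=z^P\bar z^Q$, $P,Q\in\mathbb{N}_0^{1+n}$; $\mathcal{P}(\mathbb{C}^{1+n})^{U(1)}$ is the span of the $d_{P,Q}$ with $|P|=|Q|$. For $\rho>0$, $\|\sum a_{P,Q}d_{P,Q}\|_{\mathbb{C}^{1+n},\rho}=\sum|a_{P,Q}|\rho^{|P+Q|}\sqrt{|P+Q|!}$. $D_n=Z/U(1)$, $Z=\{r:-|r^0|^2+\sum_{i\ge1}|r^i|^2=-1\}$, identified with the open unit ball via $w^i=r^i/r^0$. For $P,Q\in\mathbb{N}_0^{1+n}$, $|P|=|Q|$: $f_{P,Q}([r])=r^P\bar r^Q=w^{P'}\bar w^{Q'}/(1-w\cdot\bar w)^{|P|}$; $\mathcal{P}(D_n)$ their span.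 For $P,Q\in\mathbb{N}_0^n$: $f_{r,P,Q}=w^P\bar w^Q/(1-w\cdot\bar w)^{\max\{|P|,|Q|\}}$, a basis of $\mathcal{P}(D_n)$; $\|\sum b_{P,Q}f_{r,P,Q}\|_{D_n,\rho}=\sum|b_{P,Q}|\rho^{|P+Q|}$. $H=\mathbb{C}\setminus(\{0\}\cup\{-1/(2m):m\in\mathbb{N}\})$; $(z)_m=\prod_{k=0}^{m-1}(z+k)$. For $\hbar\in H$: $\Psi_\hbar:\mathcal{P}(\mathbb{C}^{1+n})^{U(1)}\to\mathcal{P}(D_n)$ is linear with $\Psi_\hbar(d_{P,Q})=(2\hbar)^{|P|}(\frac1{2\hbar})_{|P|}f_{P,Q}$; $\Phi_\hbar:\mathcal{P}(D_n)\to\mathcal{P}(\mathbb{C}^{1+n})$ is linear with $\Phi_\hbar(f_{r,P,Q})=\big((2\hbar)^{\max\{|P|,|Q|\}}(\frac1{2\hbar})_{\max\{|P|,|Q|\}}\big)^{-1}d_{\tilde P,\tilde Q}$ for $P,Q\in\mathbb{N}_0^n$, where $\tilde P=(\max\{|Q|-|P|,0\},P_1,\dots,P_n)$ and $\tilde Q=(\max\{|P|-|Q|,0\},Q_1,\dots,Q_n)$; it satisfies $\Psi_\hbar\circ\Phi_\hbar=\mathrm{id}$. *)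

theory Defs
  imports "HOL-Analysis.Analysis"
begin

text \<open>Multi-indices in N_0^{1+n} are functions nat => nat vanishing outside {0..n};
  multi-indices in N_0^n (for D_n) are functions vanishing outside {1..n}, so that
  P' (drop the 0th entry) is P(0 := 0).\<close>

definition mi :: "nat \<Rightarrow> (nat \<Rightarrow> nat) set" where
  "mi n = {P. \<forall>i>n. P i = 0}"

definition mi' :: "nat \<Rightarrow> (nat \<Rightarrow> nat) set" where
  "mi' n = {P. \<forall>i. (i = 0 \<or> i > n) \<longrightarrow> P i = 0}"

definition absmi :: "nat \<Rightarrow> (nat \<Rightarrow> nat) \<Rightarrow> nat" where
  "absmi n P = (\<Sum>i\<le>n. P i)"

definition prime_mi :: "(nat \<Rightarrow> nat) \<Rightarrow> (nat \<Rightarrow> nat)" where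
  "prime_mi P = P(0 := 0)"

definition supp :: "('a \<Rightarrow> complex) \<Rightarrow> 'a set" where
  "supp a = {x. a x \<noteq> 0}"

text \<open>An element of P(C^{1+n}) is given by its coefficients a(P,Q) w.r.t. the basis d_{P,Q}.\<close>

definition is_Cpoly :: "nat \<Rightarrow> ((nat \<Rightarrow> nat) \<times> (nat \<Rightarrow> nat) \<Rightarrow> complex) \<Rightarrow> bool" where
  "is_Cpoly n a \<longleftrightarrow> finite (supp a) \<and> supp a \<subseteq> mi n \<times> mi n"

definition is_CpolyU1 :: "nat \<Rightarrow> ((nat \<Rightarrow> nat) \<times> (nat \<Rightarrow> nat) \<Rightarrow> complex) \<Rightarrow> bool" where
  "is_CpolyU1 n a \<longleftrightarrow> is_Cpoly n a \<and> (\<forall>(P,Q)\<in>supp a. absmi n P = absmi n Q)"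

definition Cnorm :: "nat \<Rightarrow> real \<Rightarrow> ((nat \<Rightarrow> nat) \<times> (nat \<Rightarrow> nat) \<Rightarrow> complex) \<Rightarrow> real" where
  "Cnorm n \<rho> a = (\<Sum>(P,Q)\<in>supp a.
      cmod (a (P,Q)) * \<rho> ^ (absmi n P + absmi n Q) * sqrt (fact (absmi n P + absmi n Q)))"

text \<open>D_n identified with the open unit ball in C^n, coordinates w_1..w_n
  (a point is a function nat => complex vanishing outside {1..n}).\<close>

definition ball_n :: "nat \<Rightarrow> (nat \<Rightarrow> complex) set" where
  "ball_n n = {w. (\<forall>i. (i = 0 \<or> i > n) \<longrightarrow> w i = 0) \<and> (\<Sum>i\<in>{1..n}. (cmod (w i))\<^sup>2) < 1}"

definition mon :: "nat \<Rightarrow> (nat \<Rightarrow> complex) \<Rightarrow> (nat \<Rightarrow> nat) \<Rightarrow> complex" where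
  "mon n w P = (\<Prod>i\<in>{1..n}. w i ^ P i)"

definition wsq :: "nat \<Rightarrow> (nat \<Rightarrow> complex) \<Rightarrow> complex" where
  "wsq n w = (\<Sum>i\<in>{1..n}. w i * cnj (w i))"

definition fPQ :: "nat \<Rightarrow> (nat \<Rightarrow> nat) \<Rightarrow> (nat \<Rightarrow> nat) \<Rightarrow> (nat \<Rightarrow> complex) \<Rightarrow> complex" where
  "fPQ n P Q w = mon n w (prime_mi P) * cnj (mon n w (prime_mi Q)) / (1 - wsq n w) ^ absmi n P"

definition frPQ :: "nat \<Rightarrow> (nat \<Rightarrow> nat) \<Rightarrow> (nat \<Rightarrow> nat) \<Rightarrow> (nat \<Rightarrow> complex) \<Rightarrow> complex" where
  "frPQ n P Q w = mon n w P * cnj (mon n w Q) / (1 - wsq n w) ^ max (absmi n P) (absmi n Q)"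

text \<open>An element of P(D_n) is given by its (unique) coefficients b(P,Q) w.r.t. the basis f_{r,P,Q}.\<close>
definition is_Dcoeffs :: "nat \<Rightarrow> ((nat \<Rightarrow> nat) \<times> (nat \<Rightarrow> nat) \<Rightarrow> complex) \<Rightarrow> bool" where
  "is_Dcoeffs n b \<longleftrightarrow> finite (supp b) \<and> supp b \<subseteq> mi' n \<times> mi' n"

definition Dfun :: "nat \<Rightarrow> ((nat \<Rightarrow> nat) \<times> (nat \<Rightarrow> nat) \<Rightarrow> complex) \<Rightarrow> (nat \<Rightarrow> complex) \<Rightarrow> complex" where
  "Dfun n b w = (\<Sum>(P,Q)\<in>supp b. b (P,Q) * frPQ n P Q w)"

definition Dnorm_coeffs :: "nat \<Rightarrow> real \<Rightarrow> ((nat \<Rightarrow> nat) \<times> (nat \<Rightarrow> nat) \<Rightarrow> complex) \<Rightarrow> real" where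
  "Dnorm_coeffs n \<rho> b = (\<Sum>(P,Q)\<in>supp b. cmod (b (P,Q)) * \<rho> ^ (absmi n P + absmi n Q))"

text \<open>Norm of a function in P(D_n): computed from its coefficients in the basis f_{r,P,Q}
  (unique, since the f_{r,P,Q} form a basis).\<close>
definition Dnorm :: "nat \<Rightarrow> real \<Rightarrow> ((nat \<Rightarrow> complex) \<Rightarrow> complex) \<Rightarrow> real" where
  "Dnorm n \<rho> F = Dnorm_coeffs n \<rho>
     (THE b. is_Dcoeffs n b \<and> (\<forall>w\<in>ball_n n. F w = Dfun n b w))"

definition Hset :: "complex set" where
  "Hset = - ({0} \<union> {- 1 / (2 * of_nat m) | m::nat. m \<ge> 1})"

definition Psi :: "nat \<Rightarrow> complex \<Rightarrow> ((nat \<Rightarrow> nat) \<times> (nat \<Rightarrow> nat) \<Rightarrow> complex)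
                    \<Rightarrow> (nat \<Rightarrow> complex) \<Rightarrow> complex" where
  "Psi n h a = (\<lambda>w. \<Sum>(P,Q)\<in>supp a.
      a (P,Q) * ((2*h) ^ absmi n P * pochhammer (1 / (2*h)) (absmi n P)) * fPQ n P Q w)"

definition tildeP :: "nat \<Rightarrow> (nat \<Rightarrow> nat) \<Rightarrow> (nat \<Rightarrow> nat) \<Rightarrow> (nat \<Rightarrow> nat)" where
  "tildeP n P Q = P(0 := absmi n Q - absmi n P)"

definition Phi :: "nat \<Rightarrow> complex \<Rightarrow> ((nat \<Rightarrow> nat) \<times> (nat \<Rightarrow> nat) \<Rightarrow> complex)
                    \<Rightarrow> ((nat \<Rightarrow> nat) \<times> (nat \<Rightarrow> nat) \<Rightarrow> complex)" where
  "Phi n h b = (\<lambda>(X,Y). \<Sum>(P,Q)\<in>supp b.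
      (if (X,Y) = (tildeP n P Q, tildeP n Q P)
       then b (P,Q) / ((2*h) ^ max (absmi n P) (absmi n Q)
                       * pochhammer (1 / (2*h)) (max (absmi n P) (absmi n Q)))
       else 0))"

end

theory Submission
  imports Defs
begin

lemma absmi_split: "absmi n P = P 0 + (\<Sum>i\<in>{1..n}. P i)"
proof -
  have "{..n} = insert 0 {1..n}" by auto
  then show ?thesis unfolding absmi_def by simp
qed

lemma sum_upd_in: "i \<in> A \<Longrightarrow> finite A \<Longrightarrow> (\<Sum>j\<in>A. (P(i:=v)) j) = (\<Sum>j\<in>A. P j) - P i + (v::nat)"
proof -
  assume i: "i \<in> A" and f: "finite A"
  have "(\<Sum>j\<in>A. (P(i:=v)) j) = v + (\<Sum>j\<in>A-{i}. (P(i:=v)) j)"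
    using sum.remove[OF f i, of "P(i:=v)"] by simp
  also have "(\<Sum>j\<in>A-{i}. (P(i:=v)) j) = (\<Sum>j\<in>A-{i}. P j)"
    by (rule sum.cong) auto
  finally have 1: "(\<Sum>j\<in>A. (P(i:=v)) j) = v + (\<Sum>j\<in>A-{i}. P j)" .
  have "(\<Sum>j\<in>A. P j) = P i + (\<Sum>j\<in>A-{i}. P j)"
    using sum.remove[OF f i, of P] by simp
  with 1 show ?thesis by simp
qed

lemma absmi_upd0: "absmi n (P(0:=v)) = v + (\<Sum>i\<in>{1..n}. P i)"
  by (simp add: absmi_split)

lemma absmi_upd: "i \<in> {1..n} \<Longrightarrow> absmi n (P(i:=v)) = P 0 + ((\<Sum>j\<in>{1..n}. P j) - P i + v)"
proof -
  assume i: "i \<in> {1..n}"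
  then have "(P(i:=v)) 0 = P 0" by auto
  moreover have "(\<Sum>j\<in>{1..n}. (P(i:=v)) j) = (\<Sum>j\<in>{1..n}. P j) - P i + v"
    by (rule sum_upd_in[OF i]) simp
  ultimately show ?thesis by (simp only: absmi_split)
qed

lemma mon_upd0: "mon n w (P(0:=v)) = mon n w P"
  unfolding mon_def by (rule prod.cong) auto

lemma mon_upd_suc: "i \<in> {1..n} \<Longrightarrow> mon n w (P(i:= P i + 1)) = mon n w P * w i"
proof -
  assume i: "i \<in> {1..n}"
  have f: "finite {1..n}" by simp
  have "mon n w (P(i:= P i + 1)) = w i ^ (P i + 1) * (\<Prod>j\<in>{1..n}-{i}. w j ^ (P(i:= P i + 1)) j)"
    unfolding mon_def using prod.remove[OF f i, of "\<lambda>j. w j ^ (P(i:=P i+1)) j"] by simp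
  also have "(\<Prod>j\<in>{1..n}-{i}. w j ^ (P(i:= P i + 1)) j) = (\<Prod>j\<in>{1..n}-{i}. w j ^ P j)"
    by (rule prod.cong) auto
  finally have 1: "mon n w (P(i:= P i + 1)) = w i ^ (P i + 1) * (\<Prod>j\<in>{1..n}-{i}. w j ^ P j)" .
  have "mon n w P = w i ^ P i * (\<Prod>j\<in>{1..n}-{i}. w j ^ P j)"
    unfolding mon_def using prod.remove[OF f i, of "\<lambda>j. w j ^ P j"] by simp
  with 1 show ?thesis by simp
qed

lemma wsq_real: "wsq n w = of_real (\<Sum>i\<in>{1..n}. (cmod (w i))\<^sup>2)"
  unfolding wsq_def of_real_sum complex_norm_square by simp

lemma ball_denom: "w \<in> ball_n n \<Longrightarrow> 1 - wsq n w \<noteq> 0"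
proof
  assume w: "w \<in> ball_n n" and e: "1 - wsq n w = 0"
  have "(\<Sum>i\<in>{1..n}. (cmod (w i))\<^sup>2) < 1" using w unfolding ball_n_def by simp
  moreover have "(\<Sum>i\<in>{1..n}. (cmod (w i))\<^sup>2) = 1"
    using e unfolding wsq_real by (metis eq_iff_diff_eq_0 of_real_eq_1_iff)
  ultimately show False by simp
qed

type_synonym cf = "(nat \<Rightarrow> nat) \<times> (nat \<Rightarrow> nat) \<Rightarrow> complex"

definition rep :: "nat \<Rightarrow> cf \<Rightarrow> ((nat \<Rightarrow> complex) \<Rightarrow> complex) \<Rightarrow> bool" where
  "rep n b F \<longleftrightarrow> is_Dcoeffs n b \<and> (\<forall>w\<in>ball_n n. F w = Dfun n b w)"

lemma Dfun_superset:
  assumes "finite S" "supp b \<subseteq> S"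
  shows "Dfun n b w = (\<Sum>(P,Q)\<in>S. b (P,Q) * frPQ n P Q w)"
  unfolding Dfun_def
  by (rule sum.mono_neutral_left[OF assms]) (auto simp: supp_def)

lemma Dnorm_superset:
  assumes "finite S" "supp b \<subseteq> S"
  shows "Dnorm_coeffs n \<rho> b = (\<Sum>(P,Q)\<in>S. cmod (b (P,Q)) * \<rho> ^ (absmi n P + absmi n Q))"
  unfolding Dnorm_coeffs_def
  by (rule sum.mono_neutral_left[OF assms]) (auto simp: supp_def)

lemma supp_add: "supp (\<lambda>x. b1 x + b2 x) \<subseteq> supp b1 \<union> supp b2"
  by (auto simp: supp_def)

lemma rep_add:
  assumes "rep n b1 F1" "rep n b2 F2"
  shows "rep n (\<lambda>x. b1 x + b2 x) (\<lambda>w. F1 w + F2 w)"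
proof -
  let ?S = "supp b1 \<union> supp b2"
  have f: "finite ?S" and s1: "supp b1 \<subseteq> ?S" and s2: "supp b2 \<subseteq> ?S"
    using assms by (auto simp: rep_def is_Dcoeffs_def)
  have s: "supp (\<lambda>x. b1 x + b2 x) \<subseteq> ?S" by (rule supp_add)
  have "is_Dcoeffs n (\<lambda>x. b1 x + b2 x)"
    using assms s f unfolding rep_def is_Dcoeffs_def by (meson finite_subset order_trans sup.boundedI s)
  moreover have "F1 w + F2 w = Dfun n (\<lambda>x. b1 x + b2 x) w" if w: "w \<in> ball_n n" for w
  proof -
    have "F1 w + F2 w = Dfun n b1 w + Dfun n b2 w" using assms w by (simp add: rep_def)
    also have "\<dots> = (\<Sum>(P,Q)\<in>?S. b1 (P,Q) * frPQ n P Q w) + (\<Sum>(P,Q)\<in>?S. b2 (P,Q) * frPQ n P Q w)"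
      using Dfun_superset[OF f s1] Dfun_superset[OF f s2] by simp
    also have "\<dots> = (\<Sum>(P,Q)\<in>?S. (b1 (P,Q) + b2 (P,Q)) * frPQ n P Q w)"
      by (simp add: sum.distrib[symmetric] case_prod_beta algebra_simps)
    also have "\<dots> = Dfun n (\<lambda>x. b1 x + b2 x) w"
      using Dfun_superset[OF f s, of n w] by simp
    finally show ?thesis .
  qed
  ultimately show ?thesis unfolding rep_def by blast
qed

lemma Dnorm_add:
  assumes "rep n b1 F1" "rep n b2 F2" "\<rho> \<ge> 0"
  shows "Dnorm_coeffs n \<rho> (\<lambda>x. b1 x + b2 x) \<le> Dnorm_coeffs n \<rho> b1 + Dnorm_coeffs n \<rho> b2"
proof -
  let ?S = "supp b1 \<union> supp b2"
  have f: "finite ?S" and s1: "supp b1 \<subseteq> ?S" and s2: "supp b2 \<subseteq> ?S"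
    using assms by (auto simp: rep_def is_Dcoeffs_def)
  have s: "supp (\<lambda>x. b1 x + b2 x) \<subseteq> ?S" by (rule supp_add)
  have "Dnorm_coeffs n \<rho> (\<lambda>x. b1 x + b2 x) = (\<Sum>(P,Q)\<in>?S. cmod (b1 (P,Q) + b2 (P,Q)) * \<rho> ^ (absmi n P + absmi n Q))"
    using Dnorm_superset[OF f s] by simp
  also have "\<dots> \<le> (\<Sum>(P,Q)\<in>?S. cmod (b1 (P,Q)) * \<rho> ^ (absmi n P + absmi n Q) + cmod (b2 (P,Q)) * \<rho> ^ (absmi n P + absmi n Q))"
    by (rule sum_mono) (auto simp: ring_distribs[symmetric] intro!: mult_right_mono norm_triangle_ineq zero_le_power assms(3))
  also have "\<dots> = Dnorm_coeffs n \<rho> b1 + Dnorm_coeffs n \<rho> b2"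
    using Dnorm_superset[OF f s1] Dnorm_superset[OF f s2] by (simp add: sum.distrib case_prod_beta)
  finally show ?thesis .
qed

lemma rep_scale:
  assumes "rep n b F"
  shows "rep n (\<lambda>x. c * b x) (\<lambda>w. c * F w)"
    and "Dnorm_coeffs n \<rho> (\<lambda>x. c * b x) = cmod c * Dnorm_coeffs n \<rho> b"
proof -
  have f: "finite (supp b)" and s: "supp (\<lambda>x. c * b x) \<subseteq> supp b"
    using assms by (auto simp: rep_def is_Dcoeffs_def supp_def)
  show "rep n (\<lambda>x. c * b x) (\<lambda>w. c * F w)"
    using assms f s unfolding rep_def is_Dcoeffs_def
    using Dfun_superset[OF f s] Dfun_superset[OF f order_refl]
    by (auto simp: sum_distrib_left case_prod_beta algebra_simps intro: finite_subset)
  show "Dnorm_coeffs n \<rho> (\<lambda>x. c * b x) = cmod c * Dnorm_coeffs n \<rho> b"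
    using Dnorm_superset[OF f s] Dnorm_superset[OF f order_refl]
    by (simp add: sum_distrib_left case_prod_beta norm_mult algebra_simps)
qed

lemma rep_zero: "rep n (\<lambda>x. 0) (\<lambda>w. 0)"
  by (simp add: rep_def is_Dcoeffs_def supp_def Dfun_def)

lemma rep_sum:
  assumes "finite A" "\<And>x. x \<in> A \<Longrightarrow> rep n (bs x) (Fs x)" "\<rho> \<ge> 0"
  shows "rep n (\<lambda>y. \<Sum>x\<in>A. bs x y) (\<lambda>w. \<Sum>x\<in>A. Fs x w) \<and>
         Dnorm_coeffs n \<rho> (\<lambda>y. \<Sum>x\<in>A. bs x y) \<le> (\<Sum>x\<in>A. Dnorm_coeffs n \<rho> (bs x))"
  using assms(1,2)
proof (induction A rule: finite_induct)
  case empty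
  then show ?case using rep_zero by (simp add: Dnorm_coeffs_def supp_def)
next
  case (insert a A)
  have r: "rep n (bs a) (Fs a)" using insert by simp
  have IH: "rep n (\<lambda>y. \<Sum>x\<in>A. bs x y) (\<lambda>w. \<Sum>x\<in>A. Fs x w)"
       "Dnorm_coeffs n \<rho> (\<lambda>y. \<Sum>x\<in>A. bs x y) \<le> (\<Sum>x\<in>A. Dnorm_coeffs n \<rho> (bs x))"
    using insert by auto
  show ?case
    using rep_add[OF r IH(1)] Dnorm_add[OF r IH(1) assms(3)] IH(2) insert(1,2) by simp
qed

lemma sum_pow_vanish:
  fixes c :: "'a \<Rightarrow> complex"
  assumes A: "finite A" and inj: "inj_on f A" and U: "infinite U"
    and van: "\<forall>u\<in>U. (\<Sum>x\<in>A. c x * u ^ f x) = 0" and x0: "x0 \<in> A"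
  shows "c x0 = 0"
proof (rule ccontr)
  assume ne: "c x0 \<noteq> 0"
  define N where "N = Max (f ` A)"
  define C where "C i = (if i \<in> f ` A then c (the_inv_into A f i) else 0)" for i
  have fin: "finite (f ` A)" using A by simp
  have sub: "f ` A \<subseteq> {..N}" using fin N_def by auto
  have key: "(\<Sum>i\<le>N. C i * u^i) = (\<Sum>x\<in>A. c x * u ^ f x)" for u
  proof -
    have "(\<Sum>i\<le>N. C i * u^i) = (\<Sum>i\<in>f ` A. C i * u^i)"
      by (rule sum.mono_neutral_right) (use sub C_def in auto)
    also have "\<dots> = (\<Sum>x\<in>A. C (f x) * u ^ f x)"
      by (rule sum.reindex[OF inj, unfolded comp_def])
    also have "\<dots> = (\<Sum>x\<in>A. c x * u ^ f x)"
      by (rule sum.cong) (auto simp: C_def the_inv_into_f_f[OF inj])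
    finally show ?thesis .
  qed
  have "C (f x0) \<noteq> 0" using ne x0 by (simp add: C_def the_inv_into_f_f[OF inj])
  moreover have "f x0 \<le> N" using sub x0 by auto
  ultimately have "finite {z. (\<Sum>i\<le>N. C i * z^i) = 0}" by (rule polyfun_roots_finite)
  moreover have "U \<subseteq> {z. (\<Sum>i\<le>N. C i * z^i) = 0}" using van key by auto
  ultimately show False using U finite_subset by blast
qed

lemma sphere_infinite: "infinite (sphere (0::complex) 1)"
proof
  assume f: "finite (sphere (0::complex) 1)"
  have "connected (sphere (0::complex) 1)" by (rule connected_sphere) simp
  then obtain a where "sphere (0::complex) 1 = {a}"
    using f connected_finite_iff_sing by (metis empty_iff mem_sphere_0 norm_one)
  moreover have "1 \<in> sphere (0::complex) 1" "-1 \<in> sphere (0::complex) 1" by auto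
  ultimately show False by auto
qed

lemma digits_bound:
  assumes "B \<ge> (1::nat)" "\<forall>i\<in>{1..n}. P i < B"
  shows "(\<Sum>i\<in>{1..n}. B^i * P i) < B^(Suc n)"
  using assms(2)
proof (induction n)
  case 0
  then show ?case using assms(1) by simp
next
  case (Suc n)
  have IH: "(\<Sum>i\<in>{1..n}. B^i * P i) < B^(Suc n)" using Suc by auto
  have "P (Suc n) < B" using Suc.prems by simp
  then have p: "P (Suc n) \<le> B - 1" by simp
  have "B^(Suc n) * P (Suc n) \<le> B^(Suc n) * (B - 1)" using p by simp
  moreover have "B^(Suc n) + B^(Suc n) * (B - 1) = B^(Suc (Suc n))"
  proof -
    have "1 + (B - 1) = B" using assms(1) by simp
    have "B^(Suc n) + B^(Suc n) * (B - 1) = B^(Suc n) * (1 + (B - 1))"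
      by (simp only: distrib_left mult_1_right)
    also have "\<dots> = B^(Suc n) * B" using \<open>1 + (B - 1) = B\<close> by simp
    finally show ?thesis by (simp only: power_Suc2)
  qed
  ultimately have "(\<Sum>i\<in>{1..n}. B^i * P i) + B^(Suc n) * P (Suc n) < B^(Suc (Suc n))"
    using IH by linarith
  moreover have "(\<Sum>i\<in>{1..Suc n}. B^i * P i) = (\<Sum>i\<in>{1..n}. B^i * P i) + B^(Suc n) * P (Suc n)"
    by (simp add: sum.cl_ivl_Suc)
  ultimately show ?case by simp
qed

lemma digits_inj:
  assumes "B \<ge> (1::nat)" "\<forall>i\<in>{1..n}. P i < B \<and> Q i < B"
    "(\<Sum>i\<in>{1..n}. B^i * P i) = (\<Sum>i\<in>{1..n}. B^i * Q i)"
  shows "\<forall>i\<in>{1..n}. P i = Q i"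
  using assms(2,3)
proof (induction n)
  case 0
  then show ?case by simp
next
  case (Suc n)
  let ?sP = "\<Sum>i\<in>{1..n}. B^i * P i" and ?sQ = "\<Sum>i\<in>{1..n}. B^i * Q i"
  have hP: "\<forall>i\<in>{1..n}. P i < B" and hQ: "\<forall>i\<in>{1..n}. Q i < B" using Suc.prems(1) by auto
  have bP: "?sP < B^(Suc n)" by (rule digits_bound[OF assms(1) hP])
  have bQ: "?sQ < B^(Suc n)" by (rule digits_bound[OF assms(1) hQ])
  have sP: "(\<Sum>i\<in>{1..Suc n}. B^i * P i) = ?sP + P (Suc n) * B^(Suc n)"
    by (simp add: sum.cl_ivl_Suc mult.commute)
  have sQ: "(\<Sum>i\<in>{1..Suc n}. B^i * Q i) = ?sQ + Q (Suc n) * B^(Suc n)"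
    by (simp add: sum.cl_ivl_Suc mult.commute)
  have eq: "?sP + P (Suc n) * B^(Suc n) = ?sQ + Q (Suc n) * B^(Suc n)"
    using Suc.prems(2) sP sQ by simp
  have pos: "B^(Suc n) \<noteq> 0" using assms(1) by simp
  have "(?sP + P (Suc n) * B^(Suc n)) div B^(Suc n) = P (Suc n)"
    using bP pos by (simp add: div_mult_self1 div_less)
  moreover have "(?sQ + Q (Suc n) * B^(Suc n)) div B^(Suc n) = Q (Suc n)"
    using bQ pos by (simp add: div_mult_self1 div_less)
  ultimately have e1: "P (Suc n) = Q (Suc n)" using eq by simp
  then have "?sP = ?sQ" using eq by simp
  then have "\<forall>i\<in>{1..n}. P i = Q i" using Suc.IH hP hQ by blast
  with e1 show ?case by (metis atLeastAtMost_iff le_Suc_eq)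
qed

lemma rep_zero_unique:
  assumes r: "rep n b (\<lambda>w. 0)"
  shows "b = (\<lambda>x. 0)"
proof (rule ccontr)
  assume "b \<noteq> (\<lambda>x. 0)"
  then obtain x1 where x1: "b x1 \<noteq> 0" by (meson ext)
  define S where "S = supp b"
  have finS: "finite S" and subS: "S \<subseteq> mi' n \<times> mi' n"
    using r by (auto simp: rep_def is_Dcoeffs_def S_def)
  have x1S: "x1 \<in> S" using x1 by (simp add: S_def supp_def)
  define B where "B = Suc (\<Sum>x\<in>S. \<Sum>i\<in>{1..n}. fst x i + snd x i)"
  have B1: "B \<ge> 1" by (simp add: B_def)
  have Bb: "fst x i < B \<and> snd x i < B" if "x \<in> S" "i \<in> {1..n}" for x i
  proof -
    have "fst x i + snd x i \<le> (\<Sum>i\<in>{1..n}. fst x i + snd x i)"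
      by (rule member_le_sum) (use that in auto)
    also have "\<dots> \<le> (\<Sum>x\<in>S. \<Sum>i\<in>{1..n}. fst x i + snd x i)"
      by (rule member_le_sum) (use that finS in auto)
    finally show ?thesis by (simp add: B_def)
  qed
  define \<kappa> where "\<kappa> P = (\<Sum>i\<in>{1..n}. B^i * P i)" for P :: "nat \<Rightarrow> nat"
  have mi'z: "P i = 0" if "P \<in> mi' n" "i \<notin> {1..n}" for P i
    using that unfolding mi'_def by (cases "i = 0") (auto simp: not_less)
  have kinj1: "fst x = fst y" if "x \<in> S" "y \<in> S" "\<kappa> (fst x) = \<kappa> (fst y)" for x y
  proof
    fix i
    show "fst x i = fst y i"
    proof (cases "i \<in> {1..n}")
      case True
      have "\<forall>i\<in>{1..n}. fst x i < B \<and> fst y i < B" using Bb that by blast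
      from digits_inj[OF B1 this] that(3) True show ?thesis by (simp add: \<kappa>_def)
    next
      case False
      then show ?thesis using mi'z that subS by (metis mem_Sigma_iff prod.collapse subsetD)
    qed
  qed
  have kinj2: "snd x = snd y" if "x \<in> S" "y \<in> S" "\<kappa> (snd x) = \<kappa> (snd y)" for x y
  proof
    fix i
    show "snd x i = snd y i"
    proof (cases "i \<in> {1..n}")
      case True
      have "\<forall>i\<in>{1..n}. snd x i < B \<and> snd y i < B" using Bb that by blast
      from digits_inj[OF B1 this] that(3) True show ?thesis by (simp add: \<kappa>_def)
    next
      case False
      then show ?thesis using mi'z that subS by (metis mem_Sigma_iff prod.collapse subsetD)
    qed
  qed
  define k where "k x = \<kappa> (fst x) + \<kappa> (snd x)" for x :: "(nat \<Rightarrow> nat) \<times> (nat \<Rightarrow> nat)"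
  define d where "d = Min (k ` S)"
  have dle: "d \<le> k x" if "x \<in> S" for x using that finS by (simp add: d_def)
  have "d \<in> k ` S" unfolding d_def using finS x1S by (intro Min_in) auto
  then obtain x0 where x0S: "x0 \<in> S" and x0d: "k x0 = d" by auto
  define Sd where "Sd = {x\<in>S. k x = d}"
  define \<sigma> where "\<sigma> t = (\<Sum>i\<in>{1..n}. t ^ (2 * B^i))" for t :: real
  define m where "m x = max (absmi n (fst x)) (absmi n (snd x))" for x :: "(nat \<Rightarrow> nat) \<times> (nat \<Rightarrow> nat)"
  define G where "G u t = (\<Sum>x\<in>S. b x * (of_real t) ^ (k x - d) * (u ^ \<kappa> (fst x) * cnj u ^ \<kappa> (snd x))
                    / (1 - of_real (\<sigma> t)) ^ m x)" for u :: complex and t :: real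
  have G0: "G u t = 0" if u: "cmod u = 1" and t: "0 < t" "t < 1 / (real n + 1)" for u t
  proof -
    define w where "w i = (if i \<in> {1..n} then (of_real t * u) ^ (B^i) else 0)" for i
    have t1: "t < 1" using t by (smt (verit) divide_le_eq_1 of_nat_0_le_iff)
    have nw: "(cmod (w i))\<^sup>2 = t ^ (2 * B^i)" if "i \<in> {1..n}" for i
      using that t u by (simp add: w_def norm_power norm_mult power_mult[symmetric] mult.commute)
    have "(\<Sum>i\<in>{1..n}. (cmod (w i))\<^sup>2) = \<sigma> t" by (simp add: nw \<sigma>_def)
    have sig_le: "\<sigma> t \<le> real n * t"
    proof -
      have "\<sigma> t \<le> (\<Sum>i\<in>{1..n}. t)"
        unfolding \<sigma>_def
      proof (rule sum_mono)
        fix i assume "i \<in> {1..n}"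
        have "1 \<le> 2 * B^i" using B1 by simp
        then show "t ^ (2 * B^i) \<le> t" using power_decreasing[of 1 "2 * B^i" t] t t1 by simp
      qed
      then show ?thesis by simp
    qed
    have "real n * t < 1"
      using t by (simp add: field_simps)
    then have sig1: "\<sigma> t < 1" using sig_le by simp
    have wb: "w \<in> ball_n n"
      unfolding ball_n_def using sig1 \<open>(\<Sum>i\<in>{1..n}. (cmod (w i))\<^sup>2) = \<sigma> t\<close> by (auto simp: w_def)
    have wsq: "wsq n w = of_real (\<sigma> t)"
      unfolding wsq_real \<open>(\<Sum>i\<in>{1..n}. (cmod (w i))\<^sup>2) = \<sigma> t\<close> ..
    have mon: "mon n w P = (of_real t * u) ^ \<kappa> P" for P
    proof -
      have "mon n w P = (\<Prod>i\<in>{1..n}. (of_real t * u) ^ (B^i * P i))"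
        unfolding mon_def by (rule prod.cong) (auto simp: w_def power_mult)
      also have "\<dots> = (of_real t * u) ^ \<kappa> P" by (simp add: \<kappa>_def power_sum)
      finally show ?thesis .
    qed
    have hterm: "frPQ n (fst x) (snd x) w = of_real t ^ d * ((of_real t) ^ (k x - d) * (u ^ \<kappa> (fst x) * cnj u ^ \<kappa> (snd x))
                    / (1 - of_real (\<sigma> t)) ^ m x)" if "x \<in> S" for x
    proof -
      have kd: "d + (k x - d) = k x" using dle[OF that] by simp
      have "(of_real t * u) ^ \<kappa> (fst x) * cnj ((of_real t * u) ^ \<kappa> (snd x))
            = of_real t ^ k x * (u ^ \<kappa> (fst x) * cnj u ^ \<kappa> (snd x))"
        by (simp add: k_def power_mult_distrib power_add)
      also have "of_real t ^ k x = (of_real t ^ d * of_real t ^ (k x - d) :: complex)"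
        by (simp only: power_add[symmetric] kd)
      finally show ?thesis
        unfolding frPQ_def mon wsq m_def by simp
    qed
    have "0 = Dfun n b w" using r wb by (simp add: rep_def)
    also have "\<dots> = (\<Sum>x\<in>S. b x * frPQ n (fst x) (snd x) w)"
      by (simp add: Dfun_def S_def case_prod_beta)
    also have "\<dots> = (\<Sum>x\<in>S. of_real t ^ d * (b x * ((of_real t) ^ (k x - d) * (u ^ \<kappa> (fst x) * cnj u ^ \<kappa> (snd x))
                    / (1 - of_real (\<sigma> t)) ^ m x)))"
      by (rule sum.cong) (simp_all add: hterm)
    also have "\<dots> = of_real t ^ d * G u t"
      by (simp add: G_def sum_distrib_left mult.assoc)
    finally have "of_real t ^ d * G u t = 0" by simp
    then show ?thesis using t by simp
  qed
  have sig0: "\<sigma> 0 = 0" unfolding \<sigma>_def by (rule sum.neutral) (use B1 in auto)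
  have cont: "isCont (G u) 0" for u
    unfolding G_def \<sigma>_def
    by (intro continuous_intros) (use sig0 in \<open>auto simp: \<sigma>_def\<close>)
  have Gz: "G u 0 = 0" if u: "cmod u = 1" for u
  proof -
    have l1: "(G u \<longlongrightarrow> G u 0) (at_right 0)"
      using cont[of u] by (simp add: isCont_def tendsto_mono[OF at_within_le_at])
    have "eventually (\<lambda>t. G u t = 0) (at_right (0::real))"
      unfolding eventually_at_right_field
      by (rule exI[of _ "1 / (real n + 1)"]) (auto intro: G0[OF u])
    then have l2: "(G u \<longlongrightarrow> 0) (at_right 0)"
      by (simp add: tendsto_eventually)
    show ?thesis using tendsto_unique[OF _ l1 l2] by simp
  qed
  have Gz2: "(\<Sum>x\<in>Sd. b x * u ^ (2 * \<kappa> (fst x))) = 0" if u: "cmod u = 1" for u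
  proof -
    have "G u 0 = (\<Sum>x\<in>S. if k x = d then b x * (u ^ \<kappa> (fst x) * cnj u ^ \<kappa> (snd x)) else 0)"
      unfolding G_def sig0
    proof (rule sum.cong)
      fix x assume "x \<in> S"
      then have "d \<le> k x" by (rule dle)
      then show "b x * (of_real 0) ^ (k x - d) * (u ^ \<kappa> (fst x) * cnj u ^ \<kappa> (snd x)) / (1 - of_real 0) ^ m x =
          (if k x = d then b x * (u ^ \<kappa> (fst x) * cnj u ^ \<kappa> (snd x)) else 0)"
        by (cases "k x = d") auto
    qed simp
    also have "\<dots> = (\<Sum>x\<in>Sd. b x * (u ^ \<kappa> (fst x) * cnj u ^ \<kappa> (snd x)))"
      by (simp add: Sd_def sum.inter_filter[OF finS])
    finally have "(\<Sum>x\<in>Sd. b x * (u ^ \<kappa> (fst x) * cnj u ^ \<kappa> (snd x))) = 0" using Gz[OF u] by simp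
    then have "u ^ d * (\<Sum>x\<in>Sd. b x * (u ^ \<kappa> (fst x) * cnj u ^ \<kappa> (snd x))) = 0" by simp
    moreover have "u ^ d * (b x * (u ^ \<kappa> (fst x) * cnj u ^ \<kappa> (snd x))) = b x * u ^ (2 * \<kappa> (fst x))"
      if "x \<in> Sd" for x
    proof -
      have cu: "cnj u * u = 1" using u by (metis complex_norm_square mult.commute norm_one of_real_1 power_one)
      have "d = \<kappa> (fst x) + \<kappa> (snd x)" using that by (simp add: Sd_def k_def)
      then have "u ^ d * (u ^ \<kappa> (fst x) * cnj u ^ \<kappa> (snd x)) = u ^ (2 * \<kappa> (fst x)) * (cnj u * u) ^ \<kappa> (snd x)"
        by (simp add: power_add power_mult_distrib mult_2 algebra_simps)
      then show ?thesis using cu by simp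
    qed
    ultimately show ?thesis by (simp add: sum_distrib_left)
  qed
  have injSd: "inj_on (\<lambda>x. 2 * \<kappa> (fst x)) Sd"
  proof (rule inj_onI)
    fix x y assume xy: "x \<in> Sd" "y \<in> Sd" "2 * \<kappa> (fst x) = 2 * \<kappa> (fst y)"
    then have xS: "x \<in> S" and yS: "y \<in> S" by (auto simp: Sd_def)
    have f: "fst x = fst y" using kinj1[OF xS yS] xy(3) by simp
    have "\<kappa> (snd x) = \<kappa> (snd y)" using xy f by (simp add: Sd_def k_def)
    then have "snd x = snd y" using kinj2[OF xS yS] by simp
    with f show "x = y" by (simp add: prod_eq_iff)
  qed
  have "x0 \<in> Sd" using x0S x0d by (simp add: Sd_def)
  have "b x0 = 0"
    by (rule sum_pow_vanish[OF _ injSd sphere_infinite _ \<open>x0 \<in> Sd\<close>])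
       (use finS Gz2 in \<open>auto simp: Sd_def\<close>)
  then show False using x0S by (simp add: S_def supp_def)
qed

lemma rep_unique:
  assumes "rep n b1 F" "rep n b2 F"
  shows "b1 = b2"
proof -
  have "rep n (\<lambda>x. b1 x + (-1) * b2 x) (\<lambda>w. F w + (-1) * F w)"
    by (rule rep_add[OF assms(1) rep_scale(1)[OF assms(2)]])
  moreover have "(\<lambda>w. F w + (-1) * F w) = (\<lambda>w. 0)" by simp
  ultimately have "(\<lambda>x. b1 x + (-1) * b2 x) = (\<lambda>x. 0)" using rep_zero_unique by metis
  then show ?thesis by (metis (no_types) add_eq_0_iff equation_minus_iff minus_equation_iff mult_minus1 ext)
qed

lemma Dnorm_rep:
  assumes "rep n b F"
  shows "Dnorm n \<rho> F = Dnorm_coeffs n \<rho> b"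
proof -
  have "(THE b. is_Dcoeffs n b \<and> (\<forall>w\<in>ball_n n. F w = Dfun n b w)) = b"
    by (rule the_equality) (use assms rep_unique in \<open>auto simp: rep_def\<close>)
  then show ?thesis by (simp add: Dnorm_def)
qed

lemma rep_cong: "rep n b F \<Longrightarrow> (\<And>w. w \<in> ball_n n \<Longrightarrow> G w = F w) \<Longrightarrow> rep n b G"
  by (simp add: rep_def)

lemma absmi_dec0: "P 0 \<ge> 1 \<Longrightarrow> absmi n (P(0 := P 0 - 1)) = absmi n P - 1"
  by (simp add: absmi_upd0 absmi_split)

lemma absmi_inc: "i \<in> {1..n} \<Longrightarrow> absmi n (P(i := P i + 1)) = absmi n P + 1"
proof -
  assume i: "i \<in> {1..n}"
  have "P i \<le> (\<Sum>j\<in>{1..n}. P j)" by (rule member_le_sum) (use i in auto)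
  then show ?thesis using absmi_upd[OF i, of P "P i + 1"] by (simp add: absmi_split)
qed

lemma prime_mi_mi': "P \<in> mi n \<Longrightarrow> prime_mi P \<in> mi' n"
  by (auto simp: mi_def mi'_def prime_mi_def)

lemma absmi_prime: "absmi n (prime_mi P) = absmi n P - P 0"
  by (simp add: prime_mi_def absmi_upd0 absmi_split)

lemma fPQ_identity:
  assumes w: "w \<in> ball_n n" and P0: "P 0 \<ge> 1" and Q0: "Q 0 \<ge> 1"
  defines "P0' \<equiv> P(0 := P 0 - 1)" and "Q0' \<equiv> Q(0 := Q 0 - 1)"
  shows "fPQ n P Q w = fPQ n P0' Q0' w +
     (\<Sum>i\<in>{1..n}. fPQ n (P0'(i := P0' i + 1)) (Q0'(i := Q0' i + 1)) w)"
proof -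
  define M where "M = mon n w (prime_mi P) * cnj (mon n w (prime_mi Q))"
  define N where "N = absmi n P"
  define D where "D = 1 - wsq n w"
  have D: "D \<noteq> 0" using ball_denom[OF w] by (simp add: D_def)
  have N1: "N \<ge> 1" using P0 by (simp add: N_def absmi_split)
  have pP: "prime_mi P0' = prime_mi P" "prime_mi Q0' = prime_mi Q"
    by (simp_all add: P0'_def Q0'_def prime_mi_def)
  have aP: "absmi n P0' = N - 1" using absmi_dec0[of P n, OF P0] by (simp add: P0'_def N_def)
  have f0: "fPQ n P0' Q0' w = M / D ^ (N - 1)"
    by (simp add: fPQ_def pP aP M_def D_def)
  have fi: "fPQ n (P0'(i := P0' i + 1)) (Q0'(i := Q0' i + 1)) w = M * (w i * cnj (w i)) / D ^ N"
    if i: "i \<in> {1..n}" for i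
  proof -
    have i0: "i \<noteq> 0" using i by auto
    have "prime_mi (P0'(i := P0' i + 1)) = (prime_mi P)(i := prime_mi P i + 1)"
      using i0 by (auto simp: P0'_def prime_mi_def)
    moreover have "prime_mi (Q0'(i := Q0' i + 1)) = (prime_mi Q)(i := prime_mi Q i + 1)"
      using i0 by (auto simp: Q0'_def prime_mi_def)
    moreover have "absmi n (P0'(i := P0' i + 1)) = N"
      using absmi_inc[OF i, of P0'] aP N1 by simp
    ultimately show ?thesis
      by (simp add: fPQ_def mon_upd_suc[OF i, unfolded Suc_eq_plus1[symmetric]] M_def D_def mult_ac)
  qed
  have "(\<Sum>i\<in>{1..n}. fPQ n (P0'(i := P0' i + 1)) (Q0'(i := Q0' i + 1)) w) =
        (\<Sum>i\<in>{1..n}. M * (w i * cnj (w i)) / D ^ N)"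
    by (rule sum.cong[OF refl fi])
  also have "\<dots> = M * wsq n w / D ^ N"
    by (simp add: wsq_def sum_distrib_left sum_divide_distrib)
  finally have "(\<Sum>i\<in>{1..n}. fPQ n (P0'(i := P0' i + 1)) (Q0'(i := Q0' i + 1)) w) = M * wsq n w / D ^ N" .
  moreover have "fPQ n P Q w = M / D ^ N" by (simp add: fPQ_def M_def D_def N_def)
  moreover have "M / D ^ N = M / D ^ (N - 1) + M * wsq n w / D ^ N"
  proof -
    have "D ^ N = D * D ^ (N - 1)" using N1 by (metis Suc_diff_1 less_le_trans power_Suc zero_less_one)
    moreover have "M = D * M + M * wsq n w" by (simp add: D_def algebra_simps)
    ultimately show ?thesis using D by (simp add: field_simps)
  qed
  ultimately show ?thesis using f0 by simp
qed

lemma expand: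
  fixes \<rho> :: real
  assumes rho: "\<rho> \<ge> 0"
  shows "\<forall>P Q. P \<in> mi n \<longrightarrow> Q \<in> mi n \<longrightarrow> absmi n P = absmi n Q \<longrightarrow> min (P 0) (Q 0) = j \<longrightarrow>
    (\<exists>b. rep n b (fPQ n P Q) \<and>
         Dnorm_coeffs n \<rho> b \<le> (real n + 1) ^ j * (max 1 \<rho>) ^ (absmi n P + absmi n Q))"
proof (induction j)
  case 0
  show ?case
  proof (intro allI impI)
    fix P Q assume P: "P \<in> mi n" and Q: "Q \<in> mi n" and eq: "absmi n P = absmi n Q"
      and mn: "min (P 0) (Q 0) = 0"
    define b where "b x = (if x = (prime_mi P, prime_mi Q) then 1 else (0::complex))" for x
    have supp: "supp b = {(prime_mi P, prime_mi Q)}" by (auto simp: supp_def b_def)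
    have mx: "absmi n P = max (absmi n (prime_mi P)) (absmi n (prime_mi Q))"
      using mn eq by (auto simp: absmi_prime)
    have fe: "fPQ n P Q w = frPQ n (prime_mi P) (prime_mi Q) w" for w
      unfolding fPQ_def frPQ_def by (simp only: mx)
    have "rep n b (fPQ n P Q)"
      unfolding rep_def is_Dcoeffs_def
      using prime_mi_mi'[OF P] prime_mi_mi'[OF Q]
      by (auto simp: supp Dfun_def b_def fe)
    moreover have "Dnorm_coeffs n \<rho> b \<le> (real n + 1) ^ 0 * (max 1 \<rho>) ^ (absmi n P + absmi n Q)"
    proof -
      have "Dnorm_coeffs n \<rho> b = \<rho> ^ (absmi n (prime_mi P) + absmi n (prime_mi Q))"
        by (simp add: Dnorm_coeffs_def supp b_def)
      also have "\<dots> \<le> (max 1 \<rho>) ^ (absmi n (prime_mi P) + absmi n (prime_mi Q))"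
        by (rule power_mono) (use rho in auto)
      also have "\<dots> \<le> (max 1 \<rho>) ^ (absmi n P + absmi n Q)"
        by (rule power_increasing) (auto simp: absmi_prime)
      finally show ?thesis by simp
    qed
    ultimately show "\<exists>b. rep n b (fPQ n P Q) \<and>
         Dnorm_coeffs n \<rho> b \<le> (real n + 1) ^ 0 * (max 1 \<rho>) ^ (absmi n P + absmi n Q)" by blast
  qed
next
  case (Suc j)
  show ?case
  proof (intro allI impI)
    fix P Q assume P: "P \<in> mi n" and Q: "Q \<in> mi n" and eq: "absmi n P = absmi n Q"
      and mn: "min (P 0) (Q 0) = Suc j"
    define P0' where "P0' = P(0 := P 0 - 1)"
    define Q0' where "Q0' = Q(0 := Q 0 - 1)"
    define R where "R = max 1 \<rho>"
    define a where "a = absmi n P + absmi n Q"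
    have R1: "R \<ge> 1" by (simp add: R_def)
    have P0: "P 0 \<ge> 1" and Q0: "Q 0 \<ge> 1" using mn by auto
    have aP0: "absmi n P0' = absmi n P - 1" using absmi_dec0[of P n, OF P0] by (simp add: P0'_def)
    have aQ0: "absmi n Q0' = absmi n Q - 1" using absmi_dec0[of Q n, OF Q0] by (simp add: Q0'_def)
    have P0m: "P0' \<in> mi n" and Q0m: "Q0' \<in> mi n" using P Q by (auto simp: mi_def P0'_def Q0'_def)
    obtain b0 where b0: "rep n b0 (fPQ n P0' Q0')"
      "Dnorm_coeffs n \<rho> b0 \<le> (real n + 1) ^ j * R ^ (absmi n P0' + absmi n Q0')"
      using Suc.IH P0m Q0m eq aP0 aQ0 mn unfolding R_def by (fastforce simp: P0'_def Q0'_def)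
    have "\<exists>b. rep n b (fPQ n (P0'(i := P0' i + 1)) (Q0'(i := Q0' i + 1))) \<and>
          Dnorm_coeffs n \<rho> b \<le> (real n + 1) ^ j * R ^ a" if i: "i \<in> {1..n}" for i
    proof -
      have i0: "i \<noteq> 0" using i by auto
      have m1: "P0'(i := P0' i + 1) \<in> mi n" "Q0'(i := Q0' i + 1) \<in> mi n"
        using P0m Q0m i by (auto simp: mi_def)
      have ab: "absmi n (P0'(i := P0' i + 1)) = absmi n P" "absmi n (Q0'(i := Q0' i + 1)) = absmi n Q"
        using absmi_inc[OF i, of P0'] absmi_inc[OF i, of Q0'] aP0 aQ0 P0 Q0
        by (auto simp: absmi_split)
      have mn': "min ((P0'(i := P0' i + 1)) 0) ((Q0'(i := Q0' i + 1)) 0) = j"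
        using i0 mn by (simp add: P0'_def Q0'_def)
      have e': "absmi n (P0'(i := P0' i + 1)) = absmi n (Q0'(i := Q0' i + 1))" using ab eq by simp
      from Suc.IH[rule_format, OF m1(1) m1(2) e' mn'] show ?thesis
        unfolding ab R_def a_def .
    qed
    then obtain bs where bs: "\<And>i. i \<in> {1..n} \<Longrightarrow> rep n (bs i) (fPQ n (P0'(i := P0' i + 1)) (Q0'(i := Q0' i + 1)))
          \<and> Dnorm_coeffs n \<rho> (bs i) \<le> (real n + 1) ^ j * R ^ a"
      by metis
    have rs: "rep n (\<lambda>y. \<Sum>i\<in>{1..n}. bs i y) (\<lambda>w. \<Sum>i\<in>{1..n}. fPQ n (P0'(i := P0' i + 1)) (Q0'(i := Q0' i + 1)) w)"
      and ns: "Dnorm_coeffs n \<rho> (\<lambda>y. \<Sum>i\<in>{1..n}. bs i y) \<le> (\<Sum>i\<in>{1..n}. Dnorm_coeffs n \<rho> (bs i))"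
      using rep_sum[of "{1..n}" n bs "\<lambda>i. fPQ n (P0'(i := P0' i + 1)) (Q0'(i := Q0' i + 1))" \<rho>] bs rho by auto
    define bt where "bt y = b0 y + (\<Sum>i\<in>{1..n}. bs i y)" for y
    have "rep n bt (\<lambda>w. fPQ n P0' Q0' w + (\<Sum>i\<in>{1..n}. fPQ n (P0'(i := P0' i + 1)) (Q0'(i := Q0' i + 1)) w))"
      unfolding bt_def by (rule rep_add[OF b0(1) rs])
    then have "rep n bt (fPQ n P Q)"
      by (rule rep_cong) (simp add: fPQ_identity[of _ n P Q, OF _ P0 Q0] P0'_def Q0'_def)
    moreover have "Dnorm_coeffs n \<rho> bt \<le> (real n + 1) ^ Suc j * R ^ a"
    proof -
      have "Dnorm_coeffs n \<rho> bt \<le> Dnorm_coeffs n \<rho> b0 + Dnorm_coeffs n \<rho> (\<lambda>y. \<Sum>i\<in>{1..n}. bs i y)"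
        unfolding bt_def by (rule Dnorm_add[OF b0(1) rs rho])
      also have "\<dots> \<le> (real n + 1) ^ j * R ^ a + (\<Sum>i\<in>{1..n}. (real n + 1) ^ j * R ^ a)"
      proof (rule add_mono)
        have "R ^ (absmi n P0' + absmi n Q0') \<le> R ^ a"
          by (rule power_increasing) (use R1 aP0 aQ0 in \<open>auto simp: a_def\<close>)
        then show "Dnorm_coeffs n \<rho> b0 \<le> (real n + 1) ^ j * R ^ a"
          using b0(2) by (meson mult_left_mono order_trans zero_le_power of_nat_0_le_iff add_nonneg_nonneg zero_le_one)
        show "Dnorm_coeffs n \<rho> (\<lambda>y. \<Sum>i\<in>{1..n}. bs i y) \<le> (\<Sum>i\<in>{1..n}. (real n + 1) ^ j * R ^ a)"
          using ns bs by (meson order_trans sum_mono)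
      qed
      also have "\<dots> = (real n + 1) ^ Suc j * R ^ a" by (simp add: algebra_simps)
      finally show ?thesis .
    qed
    ultimately show "\<exists>b. rep n b (fPQ n P Q) \<and>
         Dnorm_coeffs n \<rho> b \<le> (real n + 1) ^ Suc j * (max 1 \<rho>) ^ (absmi n P + absmi n Q)"
      unfolding R_def a_def by blast
  qed
qed

definition cc :: "complex \<Rightarrow> nat \<Rightarrow> complex" where
  "cc h N = (2*h) ^ N * pochhammer (1 / (2*h)) N"

lemma cc_Suc: "h \<noteq> 0 \<Longrightarrow> cc h (Suc N) = cc h N * (1 + 2 * h * of_nat N)"
  by (simp add: cc_def pochhammer_rec' field_simps)

lemma cc_upper:
  assumes "h \<noteq> 0" "cmod h \<le> M"
  shows "cmod (cc h N) \<le> (1 + 2*M) ^ N * fact N"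
proof (induction N)
  case 0
  then show ?case by (simp add: cc_def)
next
  case (Suc N)
  have M0: "M \<ge> 0" using assms(2) norm_ge_zero order_trans by blast
  have "cmod (1 + 2 * h * of_nat N) \<le> 1 + 2 * M * N"
  proof -
    have "cmod (1 + 2 * h * of_nat N) \<le> 1 + cmod (2 * h * of_nat N)" using norm_triangle_ineq[of 1 "2 * h * of_nat N"] by simp
    also have "cmod (2 * h * of_nat N) = 2 * cmod h * N" by (simp add: norm_mult)
    also have "2 * cmod h * N \<le> 2 * M * N" using assms(2) by (simp add: mult_right_mono)
    finally show ?thesis by simp
  qed
  also have "\<dots> \<le> (1 + 2*M) * (Suc N)" using M0 by (simp add: algebra_simps)
  finally have f: "cmod (1 + 2 * h * of_nat N) \<le> (1 + 2*M) * (Suc N)" .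
  have "cmod (cc h (Suc N)) = cmod (cc h N) * cmod (1 + 2 * h * of_nat N)"
    by (simp add: cc_Suc[OF assms(1)] norm_mult)
  also have "\<dots> \<le> ((1 + 2*M) ^ N * fact N) * ((1 + 2*M) * (Suc N))"
    by (rule mult_mono[OF Suc.IH f]) (use M0 in auto)
  also have "\<dots> = (1 + 2*M) ^ Suc N * fact (Suc N)" by (simp add: algebra_simps)
  finally show ?case .
qed

lemma cc_lower:
  assumes "h \<noteq> 0" "e > 0" "\<And>j. cmod (1 + 2 * h * of_nat j) \<ge> e * (real j + 1)"
  shows "cmod (cc h N) \<ge> e ^ N * fact N"
proof (induction N)
  case 0
  then show ?case by (simp add: cc_def)
next
  case (Suc N)
  have "e ^ Suc N * fact (Suc N) = (e ^ N * fact N) * (e * (real N + 1))" by (simp add: algebra_simps)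
  also have "\<dots> \<le> cmod (cc h N) * cmod (1 + 2 * h * of_nat N)"
    by (rule mult_mono[OF Suc.IH assms(3)]) (use assms(2) in auto)
  also have "\<dots> = cmod (cc h (Suc N))" by (simp add: cc_Suc[OF assms(1)] norm_mult)
  finally show ?case .
qed

lemma fact_sq_le: "(fact N :: real) ^ 2 \<le> fact (2 * N)"
proof -
  have "(fact N * fact N :: nat) dvd fact (N + N)" by (rule fact_fact_dvd_fact)
  then have "(fact N * fact N :: nat) \<le> fact (N + N)" by (rule dvd_imp_le) simp
  then have "real (fact N * fact N) \<le> real (fact (N + N))" by (simp only: of_nat_le_iff)
  then show ?thesis by (simp add: power2_eq_square mult_2)
qed

lemma fact_2N_le: "(fact (2 * N) :: real) \<le> 4 ^ N * (fact N) ^ 2"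
proof -
  have "fact N * fact (2 * N - N) * (2 * N choose N) = (fact (2 * N) :: nat)"
    by (rule binomial_fact_lemma) simp
  moreover have "(2 * N choose N) \<le> 4 ^ N"
    using binomial_le_pow2[of "2 * N" N] by (simp add: power_mult)
  ultimately have "fact (2 * N) \<le> fact N * fact N * (4 ^ N :: nat)"
    by (metis mult_le_mono2 mult_2 add_diff_cancel_left')
  then have "real (fact (2 * N)) \<le> real (fact N * fact N * (4 ^ N :: nat))" by (simp only: of_nat_le_iff)
  then show ?thesis by (simp add: power2_eq_square algebra_simps)
qed

lemma Cnorm_superset:
  assumes "finite S" "supp a \<subseteq> S"
  shows "Cnorm n \<rho> a = (\<Sum>(P,Q)\<in>S. cmod (a (P,Q)) * \<rho> ^ (absmi n P + absmi n Q) * sqrt (fact (absmi n P + absmi n Q)))"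
  unfolding Cnorm_def
  by (rule sum.mono_neutral_left[OF assms]) (auto simp: supp_def)

lemma Dnorm_nonneg: "\<rho> \<ge> 0 \<Longrightarrow> 0 \<le> Dnorm_coeffs n \<rho> b"
  unfolding Dnorm_coeffs_def by (rule sum_nonneg) auto

lemma Hset_ne0: "h \<in> Hset \<Longrightarrow> h \<noteq> 0"
  by (auto simp: Hset_def)

lemma part1:
  assumes K: "compact K" "K \<subseteq> Hset" and rho: "\<rho> > 0"
  shows "\<exists>\<rho>'>0. \<forall>h\<in>K. \<forall>a. is_CpolyU1 n a \<longrightarrow> Dnorm n \<rho> (Psi n h a) \<le> Cnorm n \<rho>' a"
proof -
  obtain M where M: "\<forall>h\<in>K. cmod h \<le> M" using compact_imp_bounded[OF K(1)] bounded_iff by blast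
  define M' where "M' = max 0 M"
  define R where "R = max 1 \<rho>"
  define \<rho>' where "\<rho>' = sqrt ((1 + 2*M') * (real n + 1) * R^2)"
  have M'0: "M' \<ge> 0" by (simp add: M'_def)
  have R1: "R \<ge> 1" by (simp add: R_def)
  have rho'0: "\<rho>' > 0" unfolding \<rho>'_def using M'0 R1 by (auto intro!: mult_pos_pos)
  have key: "(1 + 2*M') ^ N * fact N * ((real n + 1) ^ N * R ^ (N + N)) \<le> \<rho>' ^ (N + N) * sqrt (fact (N + N))" for N
  proof -
    have "\<rho>' ^ 2 = (1 + 2*M') * (real n + 1) * R^2" unfolding \<rho>'_def using M'0 by simp
    then have "\<rho>' ^ (N + N) = ((1 + 2*M') * (real n + 1) * R^2) ^ N"
      by (simp add: mult_2[symmetric] power_mult)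
    moreover have "R ^ (N + N) = (R^2)^N" by (metis mult_2 power_mult)
    ultimately have e: "\<rho>' ^ (N + N) = (1 + 2*M') ^ N * ((real n + 1) ^ N * R ^ (N + N))"
      by (simp only: power_mult_distrib mult.assoc)
    have "fact N \<le> sqrt (fact (N + N))"
      by (rule real_le_rsqrt) (use fact_sq_le[of N] in \<open>simp add: mult_2\<close>)
    then show ?thesis unfolding e using M'0 R1
      by (simp add: mult_ac mult_left_mono)
  qed
  show ?thesis
  proof (intro exI[of _ \<rho>'] conjI ballI allI impI)
    show "\<rho>' > 0" by (rule rho'0)
    fix h a assume hK: "h \<in> K" and a: "is_CpolyU1 n a"
    have h0: "h \<noteq> 0" using hK K(2) Hset_ne0 by blast
    have hM: "cmod h \<le> M'" using M hK by (auto simp: M'_def)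
    define S where "S = supp a"
    have finS: "finite S" and subS: "S \<subseteq> mi n \<times> mi n" and eqS: "\<And>x. x \<in> S \<Longrightarrow> absmi n (fst x) = absmi n (snd x)"
      using a by (auto simp: is_CpolyU1_def is_Cpoly_def S_def)
    have "\<exists>b. rep n b (fPQ n (fst x) (snd x)) \<and>
          Dnorm_coeffs n \<rho> b \<le> (real n + 1) ^ absmi n (fst x) * R ^ (absmi n (fst x) + absmi n (snd x))"
      if x: "x \<in> S" for x
    proof -
      have m: "fst x \<in> mi n" "snd x \<in> mi n" using subS x by auto
      obtain b where b: "rep n b (fPQ n (fst x) (snd x))"
        "Dnorm_coeffs n \<rho> b \<le> (real n + 1) ^ min (fst x 0) (snd x 0) * R ^ (absmi n (fst x) + absmi n (snd x))"
        using expand[of \<rho> n "min (fst x 0) (snd x 0)"] rho m eqS[OF x] unfolding R_def by force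
      have "min (fst x 0) (snd x 0) \<le> absmi n (fst x)" by (simp add: absmi_split min.coboundedI1)
      then have "(real n + 1) ^ min (fst x 0) (snd x 0) \<le> (real n + 1) ^ absmi n (fst x)"
        by (rule power_increasing) simp
      then have "Dnorm_coeffs n \<rho> b \<le> (real n + 1) ^ absmi n (fst x) * R ^ (absmi n (fst x) + absmi n (snd x))"
        using b(2) R1 by (meson mult_right_mono order_trans zero_le_power zero_le_one dual_order.trans)
      with b(1) show ?thesis by blast
    qed
    then obtain bs where bs: "\<And>x. x \<in> S \<Longrightarrow> rep n (bs x) (fPQ n (fst x) (snd x)) \<and>
          Dnorm_coeffs n \<rho> (bs x) \<le> (real n + 1) ^ absmi n (fst x) * R ^ (absmi n (fst x) + absmi n (snd x))"
      by metis
    define coef where "coef x = a x * cc h (absmi n (fst x))" for x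
    have rx: "rep n (\<lambda>y. coef x * bs x y) (\<lambda>w. coef x * fPQ n (fst x) (snd x) w)" if "x \<in> S" for x
      using rep_scale(1) bs[OF that] by blast
    have nx: "Dnorm_coeffs n \<rho> (\<lambda>y. coef x * bs x y) = cmod (coef x) * Dnorm_coeffs n \<rho> (bs x)" if "x \<in> S" for x
      using rep_scale(2) bs[OF that] by blast
    have rs: "rep n (\<lambda>y. \<Sum>x\<in>S. coef x * bs x y) (\<lambda>w. \<Sum>x\<in>S. coef x * fPQ n (fst x) (snd x) w)"
      and ns: "Dnorm_coeffs n \<rho> (\<lambda>y. \<Sum>x\<in>S. coef x * bs x y) \<le> (\<Sum>x\<in>S. Dnorm_coeffs n \<rho> (\<lambda>y. coef x * bs x y))"
      using rep_sum[of S n "\<lambda>x y. coef x * bs x y" "\<lambda>x w. coef x * fPQ n (fst x) (snd x) w" \<rho>] finS rx rho by auto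
    have "Psi n h a = (\<lambda>w. \<Sum>x\<in>S. coef x * fPQ n (fst x) (snd x) w)"
      by (simp add: Psi_def S_def coef_def cc_def case_prod_beta mult.assoc)
    then have "Dnorm n \<rho> (Psi n h a) = Dnorm_coeffs n \<rho> (\<lambda>y. \<Sum>x\<in>S. coef x * bs x y)"
      using Dnorm_rep[OF rs] by simp
    also have "\<dots> \<le> (\<Sum>x\<in>S. cmod (coef x) * Dnorm_coeffs n \<rho> (bs x))"
      using ns nx by simp
    also have "\<dots> \<le> (\<Sum>x\<in>S. cmod (a x) * (\<rho>' ^ (absmi n (fst x) + absmi n (snd x)) * sqrt (fact (absmi n (fst x) + absmi n (snd x)))))"
    proof (rule sum_mono)
      fix x assume x: "x \<in> S"
      define N where "N = absmi n (fst x)"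
      have N2: "absmi n (snd x) = N" using eqS[OF x] by (simp add: N_def)
      have "cmod (coef x) * Dnorm_coeffs n \<rho> (bs x) \<le> (cmod (a x) * ((1 + 2*M') ^ N * fact N)) * ((real n + 1) ^ N * R ^ (N + N))"
      proof (rule mult_mono)
        show "cmod (coef x) \<le> cmod (a x) * ((1 + 2*M') ^ N * fact N)"
          unfolding coef_def norm_mult N_def by (rule mult_left_mono[OF cc_upper[OF h0 hM]]) simp
        show "Dnorm_coeffs n \<rho> (bs x) \<le> (real n + 1) ^ N * R ^ (N + N)"
          using bs[OF x] N2 by (simp add: N_def)
      qed (use M'0 Dnorm_nonneg[of \<rho> n "bs x"] rho in auto)
      also have "\<dots> \<le> cmod (a x) * (\<rho>' ^ (N + N) * sqrt (fact (N + N)))"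
        using mult_left_mono[OF key[of N], of "cmod (a x)"] by (simp add: mult_ac)
      finally show "cmod (coef x) * Dnorm_coeffs n \<rho> (bs x) \<le> cmod (a x) * (\<rho>' ^ (absmi n (fst x) + absmi n (snd x)) * sqrt (fact (absmi n (fst x) + absmi n (snd x))))"
        using N2 by (simp add: N_def)
    qed
    also have "\<dots> = Cnorm n \<rho>' a"
      by (simp add: Cnorm_def S_def case_prod_beta mult.assoc)
    finally show "Dnorm n \<rho> (Psi n h a) \<le> Cnorm n \<rho>' a" .
  qed
qed

lemma absmi_tilde: "P \<in> mi' n \<Longrightarrow> absmi n (tildeP n P Q) = max (absmi n P) (absmi n Q)"
  unfolding tildeP_def by (simp add: absmi_upd0 absmi_split mi'_def)

lemma prime_tilde: "P \<in> mi' n \<Longrightarrow> prime_mi (tildeP n P Q) = P"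
  by (auto simp: tildeP_def prime_mi_def mi'_def)

lemma sqrt_fact_le: "sqrt (fact (N + N)) \<le> 2 ^ N * (fact N :: real)"
proof -
  have "sqrt (fact (N + N)) \<le> sqrt (4 ^ N * (fact N) ^ 2)"
    using fact_2N_le[of N] by (simp add: mult_2)
  also have "4 ^ N * (fact N) ^ 2 = (2 ^ N * (fact N :: real)) ^ 2"
  proof -
    have a1: "(2::real) ^ (N * 2) = (2 ^ N) ^ 2" by (rule power_mult)
    have a2: "(2::real) ^ (2 * N) = (2 ^ 2) ^ N" by (rule power_mult)
    have "(4::real) ^ N = (2 ^ N) ^ 2" using a1 a2 by (simp only: mult.commute[of N 2]) simp
    then show ?thesis by (simp add: power_mult_distrib)
  qed
  also have "sqrt \<dots> = 2 ^ N * fact N" by simp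
  finally show ?thesis .
qed

lemma lower_e:
  assumes K: "compact K" "K \<subseteq> Hset"
  shows "\<exists>e>0. \<forall>h\<in>K. \<forall>j. cmod (1 + 2 * h * of_nat j) \<ge> e * (real j + 1)"
proof -
  define f where "f m = - 1 / (2 * of_nat (Suc m) :: complex)" for m
  define E where "E = insert 0 (range f)"
  have "(\<lambda>m. (-1/2) * (1 / of_nat (Suc m)) :: complex) \<longlonglongrightarrow> (-1/2) * 0"
    by (rule tendsto_mult[OF tendsto_const LIMSEQ_Suc[OF lim_1_over_n]])
  moreover have "(\<lambda>m. (-1/2) * (1 / of_nat (Suc m)) :: complex) = f"
    by (auto simp: f_def)
  ultimately have "f \<longlonglongrightarrow> 0" by simp
  then have "closed E" unfolding E_def by (intro compact_imp_closed compact_sequence_with_limit)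
  moreover have "K \<inter> E = {}"
  proof -
    have "h \<notin> E" if "h \<in> K" for h
    proof -
      have hH: "h \<in> Hset" using that K(2) by auto
      have "f m \<in> {- 1 / (2 * of_nat m) | m::nat. m \<ge> 1}" for m
        unfolding f_def by (intro CollectI exI[of _ "Suc m"]) simp
      then show ?thesis using hH unfolding Hset_def E_def by auto
    qed
    then show ?thesis by auto
  qed
  ultimately obtain \<delta> where d: "\<delta> > 0" "\<forall>x\<in>K. \<forall>y\<in>E. \<delta> \<le> dist x y"
    using separate_compact_closed[OF K(1)] by metis
  define e where "e = min 1 \<delta>"
  show ?thesis
  proof (intro exI[of _ e] conjI ballI allI)
    show "e > 0" using d by (simp add: e_def)
    fix h j assume h: "h \<in> K"
    show "cmod (1 + 2 * h * of_nat j) \<ge> e * (real j + 1)"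
    proof (cases j)
      case 0
      then show ?thesis by (simp add: e_def)
    next
      case (Suc m)
      have "f m \<in> E" by (simp add: E_def)
      then have dd: "\<delta> \<le> dist h (f m)" using d h by blast
      have "dist h (f m) = cmod (h + 1 / (2 * of_nat j))" by (simp add: dist_norm f_def Suc)
      moreover have "1 + 2 * h * of_nat j = (2 * of_nat j) * (h + 1 / (2 * of_nat j))"
      proof -
        have "(2 * of_nat j :: complex) \<noteq> 0"
          by (metis Suc mult_eq_0_iff nat.distinct(1) of_nat_eq_0_iff zero_neq_numeral)
        then show ?thesis by (simp add: field_simps)
      qed
      ultimately have "cmod (1 + 2 * h * of_nat j) = 2 * real j * dist h (f m)"
        by (simp add: norm_mult)
      moreover have "e * (real j + 1) \<le> \<delta> * (2 * real j)"
        using Suc d by (simp add: e_def) (smt (verit) mult_le_cancel_left_pos of_nat_0_le_iff min.cobounded2 mult_right_mono)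
      moreover have "\<delta> * (2 * real j) \<le> 2 * real j * dist h (f m)"
        using mult_right_mono[OF dd, of "2 * real j"] by (simp add: mult.commute)
      ultimately show ?thesis by linarith
    qed
  qed
qed

lemma part2:
  assumes K: "compact K" "K \<subseteq> Hset" and rho: "\<rho> > 0"
  shows "\<exists>\<rho>''>0. \<forall>h\<in>K. \<forall>b. is_Dcoeffs n b \<longrightarrow> Cnorm n \<rho> (Phi n h b) \<le> Dnorm_coeffs n \<rho>'' b"
proof -
  obtain e where e: "e > 0" "\<forall>h\<in>K. \<forall>j. cmod (1 + 2 * h * of_nat j) \<ge> e * (real j + 1)"
    using lower_e[OF K] by blast
  define \<rho>'' where "\<rho>'' = max 1 (2 * \<rho>^2 / e)"
  show ?thesis
  proof (intro exI[of _ \<rho>''] conjI ballI allI impI)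
    show "\<rho>'' > 0" by (simp add: \<rho>''_def)
    fix h b assume hK: "h \<in> K" and b: "is_Dcoeffs n b"
    have h0: "h \<noteq> 0" using hK K(2) Hset_ne0 by blast
    have ccl: "cmod (cc h N) \<ge> e ^ N * fact N" for N
      by (rule cc_lower[OF h0 e(1)]) (use e(2) hK in blast)
    define S where "S = supp b"
    have finS: "finite S" and subS: "S \<subseteq> mi' n \<times> mi' n" using b by (auto simp: is_Dcoeffs_def S_def)
    define T where "T x = (tildeP n (fst x) (snd x), tildeP n (snd x) (fst x))" for x :: "(nat \<Rightarrow> nat) \<times> (nat \<Rightarrow> nat)"
    define mx where "mx x = max (absmi n (fst x)) (absmi n (snd x))" for x :: "(nat \<Rightarrow> nat) \<times> (nat \<Rightarrow> nat)"
    have Tinj: "x = y" if "x \<in> S" "y \<in> S" "T x = T y" for x y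
    proof -
      have "fst x \<in> mi' n" "snd x \<in> mi' n" "fst y \<in> mi' n" "snd y \<in> mi' n" using that subS by auto
      moreover have "tildeP n (fst x) (snd x) = tildeP n (fst y) (snd y)"
        "tildeP n (snd x) (fst x) = tildeP n (snd y) (fst y)" using that(3) by (simp_all add: T_def)
      ultimately have "fst x = fst y" "snd x = snd y" using prime_tilde by metis+
      then show ?thesis by (simp add: prod_eq_iff)
    qed
    have injT: "inj_on T S" using Tinj by (auto intro: inj_onI)
    have Phi_eq: "Phi n h b z = (\<Sum>y\<in>S. if z = T y then b y / cc h (mx y) else 0)" for z
    proof -
      obtain X Y where z: "z = (X,Y)" by fastforce
      have "Phi n h b z = (\<Sum>(P,Q)\<in>S. (if (X,Y) = (tildeP n P Q, tildeP n Q P)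
       then b (P,Q) / ((2*h) ^ max (absmi n P) (absmi n Q)
                       * pochhammer (1 / (2*h)) (max (absmi n P) (absmi n Q)))
       else 0))"
        unfolding Phi_def z S_def by simp
      also have "\<dots> = (\<Sum>y\<in>S. if z = T y then b y / cc h (mx y) else 0)"
      proof (rule sum.cong[OF refl])
        fix y assume "y \<in> S"
        obtain P Q where y: "y = (P,Q)" by fastforce
        show "(case y of (P,Q) \<Rightarrow> (if (X,Y) = (tildeP n P Q, tildeP n Q P)
          then b (P,Q) / ((2*h) ^ max (absmi n P) (absmi n Q)
                       * pochhammer (1 / (2*h)) (max (absmi n P) (absmi n Q)))
          else 0)) = (if z = T y then b y / cc h (mx y) else 0)"
          unfolding y z T_def mx_def cc_def by simp
      qed
      finally show ?thesis .
    qed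
    have PhiT: "Phi n h b (T x) = b x / cc h (mx x)" if x: "x \<in> S" for x
    proof -
      have "Phi n h b (T x) = (\<Sum>y\<in>S. if y = x then b y / cc h (mx y) else 0)"
        unfolding Phi_eq by (rule sum.cong) (use Tinj x in auto)
      also have "\<dots> = b x / cc h (mx x)" using x finS by simp
      finally show ?thesis .
    qed
    have suppPhi: "supp (Phi n h b) \<subseteq> T ` S"
    proof
      fix z assume "z \<in> supp (Phi n h b)"
      then have "Phi n h b z \<noteq> 0" by (simp add: supp_def)
      show "z \<in> T ` S"
      proof (rule ccontr)
        assume "z \<notin> T ` S"
        then have "Phi n h b z = 0" unfolding Phi_eq by (intro sum.neutral) auto
        with \<open>Phi n h b z \<noteq> 0\<close> show False by simp
      qed
    qed
    have absT: "absmi n (fst (T x)) = mx x" "absmi n (snd (T x)) = mx x" if "x \<in> S" for x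
    proof -
      have "fst x \<in> mi' n" "snd x \<in> mi' n" using that subS by auto
      then show "absmi n (fst (T x)) = mx x" "absmi n (snd (T x)) = mx x"
        by (simp_all add: T_def mx_def absmi_tilde max.commute)
    qed
    have "Cnorm n \<rho> (Phi n h b) = (\<Sum>z\<in>T ` S. cmod (Phi n h b z) * \<rho> ^ (absmi n (fst z) + absmi n (snd z)) * sqrt (fact (absmi n (fst z) + absmi n (snd z))))"
      using Cnorm_superset[OF _ suppPhi] finS by (simp add: case_prod_beta)
    also have "\<dots> = (\<Sum>x\<in>S. cmod (Phi n h b (T x)) * \<rho> ^ (absmi n (fst (T x)) + absmi n (snd (T x))) * sqrt (fact (absmi n (fst (T x)) + absmi n (snd (T x)))))"
      by (rule sum.reindex[OF injT, unfolded comp_def])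
    also have "\<dots> = (\<Sum>x\<in>S. cmod (b x) / cmod (cc h (mx x)) * \<rho> ^ (mx x + mx x) * sqrt (fact (mx x + mx x)))"
      by (rule sum.cong) (simp_all add: PhiT absT norm_divide)
    also have "\<dots> \<le> (\<Sum>x\<in>S. cmod (b x) * \<rho>'' ^ (absmi n (fst x) + absmi n (snd x)))"
    proof (rule sum_mono)
      fix x assume x: "x \<in> S"
      define N where "N = mx x"
      define X where "X = cmod (cc h N)"
      have Y: "e ^ N * fact N > 0" using e(1) by simp
      have XY: "X \<ge> e ^ N * fact N" using ccl by (simp add: X_def)
      have X0: "X > 0" using XY Y by linarith
      have "\<rho> ^ (N + N) * sqrt (fact (N + N)) \<le> \<rho> ^ (N + N) * (2 ^ N * fact N)"
        by (rule mult_left_mono[OF sqrt_fact_le]) (use rho in simp)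
      also have "\<rho> ^ (N + N) * (2 ^ N * fact N) = (2 * \<rho>^2 / e) ^ N * (e ^ N * fact N)"
      proof -
        have q1: "(2 * \<rho>^2 / e) * e = 2 * \<rho>^2" using e(1) by simp
        have q2: "(2 * \<rho>^2 / e) ^ N * e ^ N = (2 * \<rho>^2) ^ N" by (metis power_mult_distrib q1)
        have q3: "(2 * \<rho>^2) ^ N = 2 ^ N * \<rho> ^ (N + N)"
        proof -
          have "(\<rho>^2) ^ N = \<rho> ^ (2 * N)" by (rule power_mult[symmetric])
          also have "2 * N = N + N" by simp
          finally show ?thesis by (simp only: power_mult_distrib)
        qed
        have "\<rho> ^ (N + N) * (2 ^ N * fact N) = (2 ^ N * \<rho> ^ (N + N)) * fact N" by (simp only: mult_ac)
        also have "\<dots> = ((2 * \<rho>^2 / e) ^ N * e ^ N) * fact N" by (simp only: q2 q3)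
        finally show ?thesis by (simp only: mult_ac)
      qed
      also have "\<dots> \<le> (2 * \<rho>^2 / e) ^ N * X"
        by (rule mult_left_mono[OF XY]) (use e(1) rho in simp)
      finally have "\<rho> ^ (N + N) * sqrt (fact (N + N)) / X \<le> (2 * \<rho>^2 / e) ^ N"
        using X0 by (simp add: pos_divide_le_eq)
      also have "\<dots> \<le> \<rho>'' ^ N"
        by (rule power_mono) (use e(1) rho in \<open>auto simp: \<rho>''_def\<close>)
      also have "\<dots> \<le> \<rho>'' ^ (absmi n (fst x) + absmi n (snd x))"
        by (rule power_increasing) (auto simp: N_def mx_def \<rho>''_def)
      finally have "\<rho> ^ (N + N) * sqrt (fact (N + N)) / X \<le> \<rho>'' ^ (absmi n (fst x) + absmi n (snd x))" .
      then have "cmod (b x) * (\<rho> ^ (N + N) * sqrt (fact (N + N)) / X) \<le> cmod (b x) * \<rho>'' ^ (absmi n (fst x) + absmi n (snd x))"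
        by (rule mult_left_mono) simp
      then show "cmod (b x) / cmod (cc h (mx x)) * \<rho> ^ (mx x + mx x) * sqrt (fact (mx x + mx x)) \<le> cmod (b x) * \<rho>'' ^ (absmi n (fst x) + absmi n (snd x))"
        by (simp add: N_def X_def)
    qed
    also have "\<dots> = Dnorm_coeffs n \<rho>'' b"
      by (simp add: Dnorm_coeffs_def S_def case_prod_beta)
    finally show "Cnorm n \<rho> (Phi n h b) \<le> Dnorm_coeffs n \<rho>'' b" .
  qed
qed

theorem lemma3p6:
  fixes n :: nat and K :: "complex set" and \<rho> :: real
  assumes "n \<ge> 1" and "compact K" and "K \<subseteq> Hset" and "\<rho> > 0"
  shows "(\<exists>\<rho>'>0. \<forall>h\<in>K. \<forall>a. is_CpolyU1 n a \<longrightarrow> Dnorm n \<rho> (Psi n h a) \<le> Cnorm n \<rho>' a)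
       \<and> (\<exists>\<rho>''>0. \<forall>h\<in>K. \<forall>b. is_Dcoeffs n b \<longrightarrow> Cnorm n \<rho> (Phi n h b) \<le> Dnorm_coeffs n \<rho>'' b)"
  using part1[OF assms(2,3,4)] part2[OF assms(2,3,4)] by blast

end
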